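(* Let $I=I(G)\subset S$ be an edge ideal with linear quotients with respect to the order $u_1,\dots,u_m$ of its minimal generators, and let $P=(x_{j_1},\dots,x_{j_t})$ with $j_1<\dots<j_t$. Consider the total order on the products $x_{j_1}u_1>\cdots>x_{j_t}u_1>x_{j_1}u_2>\cdots>x_{j_t}u_2>\cdots>x_{j_1}u_m>\cdots>x_{j_t}u_m$. Every $v\in\mathcal{G}(PI)$ equals at least one product $x_{j_p}u_q$; call the largest such product in this order the standard presentation of $v$, and order $\mathcal{G}(PI)$ by declaring $v>v'$ if the standard presentation of $v$ is larger than that of $v'$. Then $PI$ has linear quotients with respect to this order (listed from largest to smallest).
   Context: $S=K[x_1,\dots,x_n]$, $I(G)=(x_ix_j:\{x_i,x_j\}\in E(G))$; $\mathcal{G}(J)$ is the minimal monomial generating set of a monomial ideal $J$. $J$ has linear quotients with respect to an ordering $w_1,\dots,w_s$ of $\mathcal{G}(J)$ if for each $i\ge2$ the colon ideal $(w_1,\dots,w_{i-1}):(w_i)$ is generated by variables. *)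

theory Defs
  imports Main "HOL-Library.Multiset"
begin

text \<open>Monomials in the variables x_i (i :: nat) are modelled as multisets of
variable indices (exponent vectors); divisibility is multiset inclusion and
multiplication is multiset sum.  A monomial ideal is modelled by the set of
monomials it contains.\<close>

type_synonym monomial = "nat multiset"

definition mideal :: "monomial set \<Rightarrow> monomial set" where
  "mideal A = {m. \<exists>a\<in>A. a \<subseteq># m}"

definition mingens :: "monomial set \<Rightarrow> monomial set" where
  "mingens J = {m \<in> J. \<forall>m'\<in>J. m' \<subseteq># m \<longrightarrow> m' = m}"

definition mcolon :: "monomial set \<Rightarrow> monomial \<Rightarrow> monomial set" where
  "mcolon J w = {m. m + w \<in> J}"

definition gen_by_vars :: "monomial set \<Rightarrow> bool" where
  "gen_by_vars J \<longleftrightarrow> J = mideal {{#i#} | i. {#i#} \<in> J}"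

definition linear_quotients :: "monomial list \<Rightarrow> bool" where
  "linear_quotients ws \<longleftrightarrow>
     (\<forall>i. 1 \<le> i \<and> i < length ws \<longrightarrow>
        gen_by_vars (mcolon (mideal (set (take i ws))) (ws ! i)))"

definition edge_ideal :: "nat set set \<Rightarrow> monomial set" where
  "edge_ideal E = mideal (mset_set ` E)"

definition simple_graph :: "nat \<Rightarrow> nat set set \<Rightarrow> bool" where
  "simple_graph n E \<longleftrightarrow> (\<forall>e\<in>E. card e = 2 \<and> e \<subseteq> {1..n})"

text \<open>The list of products x_{j_1}u_1 > ... > x_{j_t}u_1 > ... > x_{j_t}u_m,
largest first.\<close>
definition products :: "nat list \<Rightarrow> monomial list \<Rightarrow> monomial list" where
  "products js us = concat (map (\<lambda>u. map (\<lambda>j. add_mset j u) js) us)"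

text \<open>Position of the standard presentation of v (largest product equal to v):
smaller position = larger in the order.\<close>
definition std_pos :: "nat list \<Rightarrow> monomial list \<Rightarrow> monomial \<Rightarrow> nat" where
  "std_pos js us v = (LEAST k. k < length (products js us) \<and> products js us ! k = v)"

end

theory Submission
  imports Defs
begin

lemma subseteq_size_eq: "A \<subseteq># B \<Longrightarrow> size B \<le> size A \<Longrightarrow> A = B"
  using mset_subset_size subset_mset.le_imp_less_or_eq by fastforce

lemma prod_nth: "q < length us \<Longrightarrow> p < length js \<Longrightarrow>
   products js us ! (q * length js + p) = add_mset (js!p) (us!q)"
proof (induction us arbitrary: q)
  case Nil thus ?case by simp
next
  case (Cons u us) show ?case
  proof (cases q)
    case 0 thus ?thesis using Cons.prems by (simp add: products_def nth_append)
  next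
    case (Suc q0)
    hence "q * length js + p = length js + (q0 * length js + p)" by simp
    then show ?thesis using Cons Suc by (simp add: products_def nth_append)
  qed
qed

lemma prod_len: "length (products js us) = length us * length js"
  by (induction us) (auto simp: products_def)

lemma prod_set: "set (products js us) = {add_mset j u | j u. j \<in> set js \<and> u \<in> set us}"
  by (auto simp: products_def)

lemma std_pos_props: "v \<in> set (products js us) \<Longrightarrow>
  std_pos js us v < length (products js us) \<and> products js us ! std_pos js us v = v"
  unfolding std_pos_def
  by (rule LeastI_ex) (auto simp: in_set_conv_nth)

lemma std_pos_le: "k < length (products js us) \<Longrightarrow> products js us ! k = v \<Longrightarrow> std_pos js us v \<le> k"
  unfolding std_pos_def by (rule Least_le) simp

lemma std_pos_decomp:
  assumes "v \<in> set (products js us)"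
  shows "0 < length js \<and> std_pos js us v div length js < length us \<and> std_pos js us v mod length js < length js
    \<and> v = add_mset (js ! (std_pos js us v mod length js)) (us ! (std_pos js us v div length js))
    \<and> std_pos js us v = (std_pos js us v div length js) * length js + std_pos js us v mod length js"
proof -
  define k where "k = std_pos js us v"
  define t where "t = length js"
  have k: "k < length us * t" "products js us ! k = v" using std_pos_props[OF assms] prod_len
    unfolding k_def t_def by auto
  hence t: "0 < t" by (cases t) auto
  have q: "k div t < length us" using k(1) t by (simp add: less_mult_imp_div_less)
  have p: "k mod t < t" using t by simp
  have e: "k = (k div t) * t + k mod t" by simp
  have "v = add_mset (js ! (k mod t)) (us ! (k div t))"
    using prod_nth[of "k div t" us "k mod t" js] q p k(2) e unfolding t_def by simp
  thus ?thesis using t q p e unfolding k_def t_def by simp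
qed

lemma edge_size: "simple_graph n E \<Longrightarrow> m \<in> edge_ideal E \<Longrightarrow> 2 \<le> size m"
  unfolding edge_ideal_def mideal_def simple_graph_def
  by (auto dest!: size_mset_mono simp: size_mset_set)

lemma edge_mingens: assumes "simple_graph n E"
  shows "mingens (edge_ideal E) = mset_set ` E"
proof
  show "mingens (edge_ideal E) \<subseteq> mset_set ` E"
  proof
    fix m assume m: "m \<in> mingens (edge_ideal E)"
    then obtain e where "e \<in> E" "mset_set e \<subseteq># m" unfolding mingens_def edge_ideal_def mideal_def by auto
    moreover have "mset_set e \<in> edge_ideal E" using \<open>e \<in> E\<close> unfolding edge_ideal_def mideal_def by auto
    ultimately show "m \<in> mset_set ` E" using m unfolding mingens_def by force
  qed
next
  show "mset_set ` E \<subseteq> mingens (edge_ideal E)"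
  proof
    fix m assume "m \<in> mset_set ` E"
    then obtain e where e: "e \<in> E" "m = mset_set e" by auto
    have sz: "size m = 2" using e assms unfolding simple_graph_def by (simp add: size_mset_set)
    have "m \<in> edge_ideal E" using e unfolding edge_ideal_def mideal_def by auto
    moreover have "\<forall>m'\<in>edge_ideal E. m' \<subseteq># m \<longrightarrow> m' = m"
      using edge_size[OF assms] sz subseteq_size_eq by metis
    ultimately show "m \<in> mingens (edge_ideal E)" unfolding mingens_def by auto
  qed
qed

lemma edge_form: assumes "simple_graph n E" "u \<in> mingens (edge_ideal E)"
  shows "\<exists>a b. a \<noteq> b \<and> u = {#a, b#}"
proof -
  obtain e where e: "e \<in> E" "u = mset_set e" using assms edge_mingens by blast
  then obtain a b where "a \<noteq> b" "e = {a,b}" using assms(1) unfolding simple_graph_def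
    by (metis card_2_iff)
  thus ?thesis using e by auto
qed

lemma PI_size: assumes "simple_graph n E"
  and "m \<in> mideal {{#j#} + u | j u. j \<in> Pvars \<and> u \<in> edge_ideal E}"
  shows "3 \<le> size m"
proof -
  from assms(2) obtain j u where "u \<in> edge_ideal E" "{#j#} + u \<subseteq># m" unfolding mideal_def by auto
  thus ?thesis using edge_size[OF assms(1)] size_mset_mono by fastforce
qed

lemma PI_intro: assumes "simple_graph n E" "j \<in> Pvars" "u \<in> mingens (edge_ideal E)"
  shows "add_mset j u \<in> mingens (mideal {{#j#} + u | j u. j \<in> Pvars \<and> u \<in> edge_ideal E})"
proof -
  have sz: "size (add_mset j u) = 3" using edge_form[OF assms(1,3)] by auto
  have mem: "add_mset j u \<in> mideal {{#j#} + u | j u. j \<in> Pvars \<and> u \<in> edge_ideal E}"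
    proof -
    have "u \<in> edge_ideal E" using assms(3) unfolding mingens_def by simp
    hence "{#j#} + u \<in> {{#j#} + u | j u. j \<in> Pvars \<and> u \<in> edge_ideal E}" using assms(2) by blast
    thus ?thesis unfolding mideal_def by force
  qed
  have "\<forall>m'\<in>mideal {{#j#} + u | j u. j \<in> Pvars \<and> u \<in> edge_ideal E}. m' \<subseteq># add_mset j u \<longrightarrow> m' = add_mset j u"
  proof (intro ballI impI)
    fix m' assume "m' \<in> mideal {{#j#} + u | j u. j \<in> Pvars \<and> u \<in> edge_ideal E}" "m' \<subseteq># add_mset j u"
    thus "m' = add_mset j u" proof -
      have "3 \<le> size m'" using PI_size[OF assms(1)] \<open>m' \<in> _\<close> by blast
      thus ?thesis using sz subseteq_size_eq[OF \<open>m' \<subseteq># _\<close>] by simp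
    qed
  qed
  thus ?thesis using mem unfolding mingens_def by blast
qed

lemma PI_form: assumes "simple_graph n E"
  "w \<in> mingens (mideal {{#j#} + u | j u. j \<in> Pvars \<and> u \<in> edge_ideal E})"
  shows "\<exists>j\<in>Pvars. \<exists>u\<in>mingens (edge_ideal E). w = add_mset j u"
proof -
  from assms(2) obtain j u where ju: "j \<in> Pvars" "u \<in> edge_ideal E" "{#j#} + u \<subseteq># w"
    unfolding mingens_def mideal_def by auto
  then obtain e where e: "e \<in> E" "mset_set e \<subseteq># u" unfolding edge_ideal_def mideal_def by auto
  have m: "mset_set e \<in> mingens (edge_ideal E)" using e edge_mingens[OF assms(1)] by auto
  have mm: "add_mset j (mset_set e) \<in> mingens (mideal {{#j#} + u | j u. j \<in> Pvars \<and> u \<in> edge_ideal E})"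
    using PI_intro[OF assms(1) ju(1) m] .
  have "add_mset j (mset_set e) \<subseteq># add_mset j u" using e(2) by simp
  also have "\<dots> \<subseteq># w" using ju(3) by simp
  finally have "add_mset j (mset_set e) \<subseteq># w" .
  moreover have "add_mset j (mset_set e) \<in> mideal {{#j#} + u | j u. j \<in> Pvars \<and> u \<in> edge_ideal E}"
    using mm unfolding mingens_def by blast
  moreover have "\<forall>m'\<in>mideal {{#j#} + u | j u. j \<in> Pvars \<and> u \<in> edge_ideal E}. m' \<subseteq># w \<longrightarrow> m' = w"
    using assms(2) unfolding mingens_def by blast
  ultimately have "w = add_mset j (mset_set e)" by blast
  thus ?thesis using ju(1) m by blast
qed

lemma cnt_lemma: "e \<noteq> k \<Longrightarrow> c \<noteq> d \<Longrightarrow> k \<noteq> c \<Longrightarrow> k \<noteq> d \<Longrightarrow>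
  count {#j',k,e#} j' \<le> count {#k,c,d#} j' \<Longrightarrow> count ({#j',k,e#} - {#k,c,d#}) x \<le> count {#e#} x"
  by (cases "x = j'"; cases "x = e"; cases "x = k"; cases "x = c"; cases "x = d"; cases "j' = k"; cases "j'=e"; cases "j'=c"; cases "j'=d"; cases "e=c"; cases "e=d") simp_all

lemma key:
  assumes dus: "distinct us" and djs: "distinct js"
  and lq: "linear_quotients us"
  and edges: "\<And>u. u \<in> set us \<Longrightarrow> \<exists>a b. a \<noteq> b \<and> u = {#a,b#}"
  and wsf: "\<And>w. w \<in> set ws \<Longrightarrow> \<exists>j\<in>set js. \<exists>u\<in>set us. w = add_mset j u"
  and wsi: "\<And>j u. j \<in> set js \<Longrightarrow> u \<in> set us \<Longrightarrow> add_mset j u \<in> set ws"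
  and s: "s \<in> set ws" and w: "w \<in> set ws" and lt: "std_pos js us s < std_pos js us w"
  shows "\<exists>s'\<in>set ws. std_pos js us s' < std_pos js us w \<and> (\<exists>x. x \<in># s - w \<and> s' \<subseteq># add_mset x w)"
proof -
  define t where "t = length js"
  define kw where "kw = std_pos js us w"
  define ks where "ks = std_pos js us s"
  define q where "q = kw div t"
  define p where "p = kw mod t"
  define q' where "q' = ks div t"
  define p' where "p' = ks mod t"
  have wP: "w \<in> set (products js us)" using wsf[OF w] prod_set by blast
  have sP: "s \<in> set (products js us)" using wsf[OF s] prod_set by blast
  have W: "0 < t" "q < length us" "p < t" "w = add_mset (js!p) (us!q)" "kw = q * t + p"
    using std_pos_decomp[OF wP] unfolding t_def kw_def q_def p_def by auto
  have S: "q' < length us" "p' < t" "s = add_mset (js!p') (us!q')" "ks = q' * t + p'"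
    using std_pos_decomp[OF sP] unfolding t_def ks_def q'_def p'_def by auto
  have lt': "ks < kw" using lt unfolding ks_def kw_def .
  have "q' \<le> q" unfolding q_def q'_def using lt' div_le_mono by simp
  have jin: "js ! p \<in> set js" "js ! p' \<in> set js" using W S t_def by auto
  have sw: "s \<noteq> w" using lt by auto
  have pos: "\<And>qq pp. qq < length us \<Longrightarrow> pp < t \<Longrightarrow>
      std_pos js us (add_mset (js!pp) (us!qq)) \<le> qq * t + pp"
  proof -
    fix qq pp assume a: "qq < length us" "pp < t"
    have "qq * t + pp < length us * t"
    proof -
      have "qq * t + pp < qq * t + t" using a by simp
      also have "\<dots> = Suc qq * t" by simp
      also have "\<dots> \<le> length us * t" using a(1) by (intro mult_le_mono1) simp
      finally show ?thesis .
    qed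
    thus "std_pos js us (add_mset (js!pp) (us!qq)) \<le> qq * t + pp"
      using std_pos_le prod_nth prod_len a unfolding t_def by metis
  qed
  show ?thesis
  proof (cases "q' = q")
    case True
    hence "p' < p" using lt' W S by simp
    hence ne: "js!p' \<noteq> js!p" using djs W S unfolding t_def by (simp add: nth_eq_iff_index_eq)
    have "js!p' \<in># s - w" using ne W S True by (simp add: in_diff_count)
    moreover have "s \<subseteq># add_mset (js!p') w" using W S True by simp
    ultimately show ?thesis using s lt by blast
  next
    case False
    hence qq: "q' < q" using \<open>q' \<le> q\<close> by simp
    define u where "u = us ! q"
    define u' where "u' = us ! q'"
    define C where "C = mcolon (mideal (set (take q us))) u"
    have "gen_by_vars C" using lq qq W unfolding linear_quotients_def C_def u_def by simp
    hence Ceq: "C = mideal {{#i#} | i. {#i#} \<in> C}" unfolding gen_by_vars_def .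
    have u'in: "u' \<in> set (take q us)" using qq W unfolding u'_def
      by (auto simp: in_set_conv_nth intro!: exI[of _ q'])
    have "u' - u \<in> C" unfolding C_def mcolon_def mideal_def using u'in
      by (auto simp: subset_eq_diff_conv[symmetric])
    hence "u' - u \<in> mideal {{#i#} | i. {#i#} \<in> C}" by (subst Ceq[symmetric])
    then obtain k where k: "{#k#} \<in> C" "k \<in># u' - u"
      unfolding mideal_def by auto
    from k(1) obtain v where v: "v \<in> set (take q us)" "v \<subseteq># add_mset k u"
      unfolding C_def mcolon_def mideal_def by auto
    then obtain q'' where q'': "q'' < q" "v = us ! q''" using W
      by (auto simp: in_set_conv_nth)
    have q''l: "q'' < length us" using q'' W by simp
    have ku: "count u' k > count u k" using k(2) by (simp add: in_diff_count)
    obtain a b where ab: "a \<noteq> b" "u' = {#a,b#}" using edges[of u'] S unfolding u'_def by auto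
    obtain c d where cd: "c \<noteq> d" "u = {#c,d#}" using edges[of u] W unfolding u_def by auto
    have "count u' k \<le> 1" using ab by (cases "k=a"; cases "k=b") auto
    hence ku0: "count u k = 0" using ku by simp
    have kin: "k \<in># u'" using ku by (intro count_inI) simp
    have sv: "s = add_mset (js!p') u'" "w = add_mset (js!p) u" using S W unfolding u_def u'_def by auto
    show ?thesis
    proof (cases "k = js ! p")
      case False
      let ?s' = "add_mset (js!p) v"
      have "?s' \<in> set ws" using wsi jin q'' q''l by auto
      moreover have "std_pos js us ?s' < kw"
      proof -
        have "std_pos js us ?s' \<le> q'' * t + p" using pos[OF q''l W(3)] q'' by simp
        also have "\<dots> < q * t + p" using q'' W(1) by simp
        finally show ?thesis using W by simp
      qed
      moreover have "k \<in># s - w" using False ku0 kin sv by (simp add: in_diff_count)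
      moreover have "?s' \<subseteq># add_mset k w" using v(2) sv by (simp add: add_mset_commute)
      ultimately show ?thesis unfolding kw_def by blast
    next
      case True
      have vw: "v \<subseteq># w" using v(2) sv True by simp
      show ?thesis
      proof (cases "js!p' \<in># s - w")
        case True
        let ?s' = "add_mset (js!p') v"
        have "?s' \<in> set ws" using wsi jin q'' q''l by auto
        moreover have "std_pos js us ?s' < kw"
        proof -
          have "std_pos js us ?s' \<le> q'' * t + p'" using pos[OF q''l S(2)] q'' by simp
          also have "\<dots> < q'' * t + t" using S by simp
          also have "\<dots> = Suc q'' * t" by simp
          also have "\<dots> \<le> q * t" using q'' by (intro mult_le_mono1) simp
          finally show ?thesis using W by simp
        qed
        moreover have "?s' \<subseteq># add_mset (js!p') w" using vw by simp
        ultimately show ?thesis using True unfolding kw_def by blast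
      next
        case False
        obtain e where e: "e \<noteq> k" "u' = {#k, e#}" using ab kin by auto
        have hj: "count s (js!p') \<le> count w (js!p')" using False by (simp add: in_diff_count not_less)
        have kcd: "k \<noteq> c" "k \<noteq> d" using ku0 cd by auto
        have s2: "s = {#js!p', k, e#}" using sv e by simp
        have w2: "w = {#k, c, d#}" using sv cd \<open>k = js!p\<close> by simp
        have cnt: "\<And>x. count (s - w) x \<le> count {#e#} x"
          using cnt_lemma[OF e(1) cd(1) kcd] hj unfolding s2 w2 by blast
        hence sub: "s - w \<subseteq># {#e#}" by (simp add: subseteq_mset_def)
        have "s - w \<noteq> {#}"
        proof
          assume "s - w = {#}"
          hence "s \<subseteq># w" using subset_eq_diff_conv[of s w "{#}"] by simp
          moreover have "size w \<le> size s" using sv cd e by simp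
          ultimately have "s = w" by (rule subseteq_size_eq)
          with sw show False by simp
        qed
        hence sw1: "s - w = {#e#}" by (rule nonempty_subseteq_mset_eq_single[OF _ sub])
        have "s \<subseteq># add_mset e w"
          using sw1 subset_eq_diff_conv[of s w "{#e#}"] by simp
        moreover have "e \<in># s - w" using sw1 by simp
        ultimately show ?thesis using s lt by blast
      qed
    qed
  qed
qed


theorem mainTheorem11:
  fixes n :: nat and E :: "nat set set" and us :: "monomial list"
    and Pvars :: "nat set" and ws :: "monomial list"
  assumes "simple_graph n E"
    and "distinct us" and "set us = mingens (edge_ideal E)"
    and "linear_quotients us"
    and "Pvars \<subseteq> {1..n}"
    and "distinct ws"
    and "set ws = mingens (mideal {{#j#} + u | j u. j \<in> Pvars \<and> u \<in> edge_ideal E})"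
    and "sorted_wrt (<) (map (std_pos (sorted_list_of_set Pvars) us) ws)"
  shows "linear_quotients ws"
proof -
  define js where "js = sorted_list_of_set Pvars"
  have fin: "finite Pvars" using assms(5) finite_subset by blast
  have setjs: "set js = Pvars" "distinct js" using fin by (auto simp: js_def)
  have srt: "sorted_wrt (<) (map (std_pos js us) ws)" using assms(8) unfolding js_def .
  have edges: "\<And>u. u \<in> set us \<Longrightarrow> \<exists>a b. a \<noteq> b \<and> u = {#a,b#}"
    using edge_form[OF assms(1)] assms(3) by blast
  have wsf: "\<And>w. w \<in> set ws \<Longrightarrow> \<exists>j\<in>set js. \<exists>u\<in>set us. w = add_mset j u"
    using PI_form[OF assms(1)] unfolding assms(7) assms(3) setjs(1) by blast
  have wsi: "\<And>j u. j \<in> set js \<Longrightarrow> u \<in> set us \<Longrightarrow> add_mset j u \<in> set ws"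
    using PI_intro[OF assms(1)] unfolding assms(7) assms(3) setjs(1) by blast
  note K = key[OF assms(2) setjs(2) assms(4) edges wsf wsi]
  have ord: "\<And>a b. a < b \<Longrightarrow> b < length ws \<Longrightarrow> std_pos js us (ws!a) < std_pos js us (ws!b)"
    using sorted_wrt_nth_less[OF srt] by fastforce
  show ?thesis unfolding linear_quotients_def
  proof (intro allI impI)
    fix i assume i: "1 \<le> i \<and> i < length ws"
    define w where "w = ws ! i"
    define S where "S = set (take i ws)"
    have wws: "w \<in> set ws" using i unfolding w_def by simp
    have inS: "\<And>x. x \<in> set ws \<Longrightarrow> std_pos js us x < std_pos js us w \<Longrightarrow> x \<in> S"
    proof -
      fix x assume x: "x \<in> set ws" "std_pos js us x < std_pos js us w"
      then obtain b where b: "b < length ws" "x = ws ! b" by (auto simp: in_set_conv_nth)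
      have "b < i"
      proof (rule ccontr)
        assume "\<not> b < i"
        hence "b = i \<or> i < b" by auto
        thus False using ord[of i b] b x i unfolding w_def by auto
      qed
      thus "x \<in> S" unfolding S_def using b by (auto simp: in_set_conv_nth intro!: exI[of _ b])
    qed
    have Slt: "\<And>x. x \<in> S \<Longrightarrow> x \<in> set ws \<and> std_pos js us x < std_pos js us w"
    proof -
      fix x assume "x \<in> S"
      then obtain a where a: "a < i" "x = ws ! a" unfolding S_def using i
        by (auto simp: in_set_conv_nth)
      thus "x \<in> set ws \<and> std_pos js us x < std_pos js us w"
        using ord[of a i] i unfolding w_def by auto
    qed
    show "gen_by_vars (mcolon (mideal (set (take i ws))) (ws ! i))"
      unfolding gen_by_vars_def S_def[symmetric] w_def[symmetric]
    proof (rule set_eqI, rule iffI)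
      fix m assume "m \<in> mcolon (mideal S) w"
      then obtain s where s: "s \<in> S" "s \<subseteq># m + w" unfolding mcolon_def mideal_def by auto
      obtain s' x where sx: "s' \<in> set ws" "std_pos js us s' < std_pos js us w"
        "x \<in># s - w" "s' \<subseteq># add_mset x w"
        using K[of s w] Slt[OF s(1)] wws by blast
      have "s - w \<subseteq># m" using s(2) subset_eq_diff_conv by blast
      hence xm: "{#x#} \<subseteq># m" using sx(3) by (simp add: mset_subset_eqD)
      have "s' \<in> S" using inS sx by blast
      hence "{#x#} \<in> mcolon (mideal S) w" using sx(4) unfolding mcolon_def mideal_def by auto
      thus "m \<in> mideal {{#i#} |i. {#i#} \<in> mcolon (mideal S) w}" using xm unfolding mideal_def by blast
    next
      fix m assume "m \<in> mideal {{#i#} |i. {#i#} \<in> mcolon (mideal S) w}"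
      then obtain x where x: "{#x#} \<in> mcolon (mideal S) w" "{#x#} \<subseteq># m" unfolding mideal_def by auto
      then obtain s where s: "s \<in> S" "s \<subseteq># {#x#} + w" unfolding mcolon_def mideal_def by auto
      have "{#x#} + w \<subseteq># m + w" using x(2) by simp
      hence "s \<subseteq># m + w" using s(2) by (rule subset_mset.order_trans[rotated])
      thus "m \<in> mcolon (mideal S) w" using s(1) unfolding mcolon_def mideal_def by auto
    qed
  qed
qed

end
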